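(* Let $T$ be an almost commutative ring, $t\mapsto\bar t$ an involution on $T$ and $\lambda\in\mathrm{center}(T)$. Then $T$ is a direct limit (directed union) of involution invariant subrings $T_j$ ($j\in\Psi$) containing $\lambda$ such that for every $j\in\Psi$ there is a subring $C'_j\subseteq\mathrm{center}(T_j)$ for which $T_j$ is a Noetherian $C_j$-module, where $C_j$ is the subring of $T_j$ consisting of all finite sums of elements of the form $c\bar c$ and $-c\bar c$ with $c\in C'_j$.
   Context: Rings are associative with $1\neq0$. A ring is almost commutative if it is finitely generated as a module over its center. An involution is a map $t\mapsto\bar t$ with $\overline{t+s}=\bar t+\bar s$, $\overline{ts}=\bar s\bar t$, $\bar{\bar t}=t$; a subring is involution invariant if it is mapped into itself by the involution. *)

theory Defs
  imports Main
begin

text \<open>Ambient ring: a type of class ring_1 (associative, with 1); subsets are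
subrings of it.\<close>

definition ring_center :: "'a::ring_1 set" where
  "ring_center = {z. \<forall>x. z * x = x * z}"

definition center_of :: "'a::ring_1 set \<Rightarrow> 'a set" where
  "center_of A = {z \<in> A. \<forall>x\<in>A. z * x = x * z}"

definition almost_commutative :: "'a::ring_1 itself \<Rightarrow> bool" where
  "almost_commutative _ \<longleftrightarrow>
     (\<exists>S::'a set. finite S \<and>
        (\<forall>t. \<exists>c. (\<forall>s\<in>S. c s \<in> ring_center) \<and> t = (\<Sum>s\<in>S. c s * s)))"

definition is_involution :: "('a::ring_1 \<Rightarrow> 'a) \<Rightarrow> bool" where
  "is_involution bar \<longleftrightarrow>
     (\<forall>t s. bar (t + s) = bar t + bar s) \<and>
     (\<forall>t s. bar (t * s) = bar s * bar t) \<and>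
     (\<forall>t. bar (bar t) = t)"

definition is_subring :: "'a::ring_1 set \<Rightarrow> bool" where
  "is_subring A \<longleftrightarrow> 0 \<in> A \<and> 1 \<in> A \<and>
     (\<forall>x\<in>A. \<forall>y\<in>A. x + y \<in> A \<and> x - y \<in> A \<and> x * y \<in> A)"

inductive_set norm_sums :: "('a::ring_1 \<Rightarrow> 'a) \<Rightarrow> 'a set \<Rightarrow> 'a set"
  for bar :: "'a \<Rightarrow> 'a" and C' :: "'a set" where
  zero: "0 \<in> norm_sums bar C'"
| plus: "c \<in> C' \<Longrightarrow> x \<in> norm_sums bar C' \<Longrightarrow> c * bar c + x \<in> norm_sums bar C'"
| minus: "c \<in> C' \<Longrightarrow> x \<in> norm_sums bar C' \<Longrightarrow> - (c * bar c) + x \<in> norm_sums bar C'"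

definition lin_span :: "'a::ring_1 set \<Rightarrow> 'a set \<Rightarrow> 'a set" where
  "lin_span C G = {(\<Sum>g\<in>G. c g * g) | c. \<forall>g\<in>G. c g \<in> C}"

definition is_submodule :: "'a::ring_1 set \<Rightarrow> 'a set \<Rightarrow> 'a set \<Rightarrow> bool" where
  "is_submodule C M N \<longleftrightarrow> N \<subseteq> M \<and> 0 \<in> N \<and>
     (\<forall>x\<in>N. \<forall>y\<in>N. x + y \<in> N) \<and> (\<forall>c\<in>C. \<forall>x\<in>N. c * x \<in> N)"

definition noetherian_module :: "'a::ring_1 set \<Rightarrow> 'a set \<Rightarrow> bool" where
  "noetherian_module C M \<longleftrightarrow> is_submodule C M M \<and>
     (\<forall>N. is_submodule C M N \<longrightarrow> (\<exists>G. finite G \<and> G \<subseteq> N \<and> N = lin_span C G))"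

end

theory Submission
  imports Defs
begin


inductive_set spn :: "'a::ring_1 set \<Rightarrow> 'a set \<Rightarrow> 'a set" for R G where
  spn_zero: "0 \<in> spn R G"
| spn_step: "r \<in> R \<Longrightarrow> g \<in> G \<Longrightarrow> x \<in> spn R G \<Longrightarrow> r * g + x \<in> spn R G"

lemma spn_add: "x \<in> spn R G \<Longrightarrow> y \<in> spn R G \<Longrightarrow> x + y \<in> spn R G"
  by (induct rule: spn.induct) (auto simp: add.assoc intro: spn.intros)

lemma spn_gen: "1 \<in> R \<Longrightarrow> g \<in> G \<Longrightarrow> g \<in> spn R G"
  using spn_step[of 1 R g G 0] by (simp add: spn_zero)

lemma spn_smult: assumes "\<forall>a\<in>R. \<forall>b\<in>R. a*b \<in> R" "c \<in> R" shows "x \<in> spn R G \<Longrightarrow> c*x \<in> spn R G"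
proof (induct rule: spn.induct)
  case spn_zero then show ?case by (simp add: spn.spn_zero)
next
  case (spn_step r g x)
  have "c*(r*g+x) = (c*r)*g + c*x" by (simp add: distrib_left mult.assoc)
  then show ?case using spn_step assms by (auto intro: spn.spn_step)
qed

lemma spn_mono: "R \<subseteq> R' \<Longrightarrow> G \<subseteq> G' \<Longrightarrow> spn R G \<subseteq> spn R' G'"
proof
  fix x assume a: "R \<subseteq> R'" "G \<subseteq> G'" and "x \<in> spn R G"
  from \<open>x \<in> spn R G\<close> show "x \<in> spn R' G'" by (induct rule: spn.induct) (use a in \<open>auto intro: spn.intros\<close>)
qed

lemma spn_min: assumes "0 \<in> X" "\<forall>r\<in>R. \<forall>g\<in>G. \<forall>x\<in>X. r*g + x \<in> X" shows "spn R G \<subseteq> X"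
proof
  fix x assume "x \<in> spn R G" then show "x \<in> X" by (induct rule: spn.induct) (use assms in auto)
qed

lemma spn_neg: assumes "is_subring R" "x \<in> spn R G" shows "-x \<in> spn R G"
proof -
  have "(0-1) \<in> R" using assms(1) unfolding is_subring_def by blast
  then have "(0-1)*x \<in> spn R G" using assms spn_smult[of R "0-1" x G] unfolding is_subring_def by blast
  then show ?thesis by simp
qed

lemma spn_diff: assumes "is_subring R" "x \<in> spn R G" "y \<in> spn R G" shows "x - y \<in> spn R G"
  using spn_add[OF assms(2) spn_neg[OF assms(1,3)]] by simp

lemma spn_insert: assumes "0 \<in> R" "\<forall>a\<in>R. \<forall>b\<in>R. a+b \<in> R"
  shows "spn R (insert g G) = {r*g + m | r m. r \<in> R \<and> m \<in> spn R G}"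
proof
  show "spn R (insert g G) \<subseteq> {r*g + m | r m. r \<in> R \<and> m \<in> spn R G}"
  proof
    fix x assume "x \<in> spn R (insert g G)"
    then show "x \<in> {r*g + m | r m. r \<in> R \<and> m \<in> spn R G}"
    proof (induct rule: spn.induct)
      case spn_zero
      have "(0::'a) = 0*g + 0" by simp
      then show ?case using assms spn.spn_zero by blast
    next
      case (spn_step r' g' x)
      then obtain r m where rm: "r \<in> R" "m \<in> spn R G" "x = r*g+m" by blast
      show ?case
      proof (cases "g' = g")
        case True
        have "r'*g' + x = (r'+r)*g + m" using True rm by (simp add: algebra_simps)
        then show ?thesis using rm spn_step assms by blast
      next
        case False
        have "r'*g' + x = r*g + (r'*g'+m)" using rm by (simp add: algebra_simps)
        moreover have "r'*g'+m \<in> spn R G" using False spn_step rm by (auto intro: spn.spn_step)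
        ultimately show ?thesis using rm by blast
      qed
    qed
  qed
next
  show "{r*g + m | r m. r \<in> R \<and> m \<in> spn R G} \<subseteq> spn R (insert g G)"
    using spn_mono[of R R G "insert g G"] by (auto intro: spn.spn_step)
qed

lemma spn_empty: "spn R {} = {0}"
proof -
  have "spn R {} \<subseteq> {0}" by (rule spn_min) auto
  then show ?thesis using spn_zero by blast
qed

lemma spn_one: assumes "is_subring R" shows "spn R {1} = R"
proof
  show "spn R {1} \<subseteq> R" by (rule spn_min) (use assms in \<open>auto simp: is_subring_def\<close>)
  show "R \<subseteq> spn R {1}"
  proof
    fix r assume "r \<in> R" then show "r \<in> spn R {1}" using spn_step[of r R 1 "{1}" 0] spn_zero[of R "{1}"] by simp
  qed
qed

lemma lin_span_eq: assumes "finite G" "0 \<in> R" "\<forall>a\<in>R. \<forall>b\<in>R. a+b \<in> R"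
  shows "lin_span R G = spn R G"
proof
  show "lin_span R G \<subseteq> spn R G" unfolding lin_span_def
  proof clarify
    fix c assume c: "\<forall>g\<in>G. c g \<in> R"
    from assms(1) c show "(\<Sum>g\<in>G. c g * g) \<in> spn R G"
    proof (induct G rule: finite_induct)
      case empty then show ?case by (simp add: spn_zero)
    next
      case (insert g F)
      then have "(\<Sum>g\<in>F. c g * g) \<in> spn (R) (insert g F)" using spn_mono[of R R F "insert g F"] by auto
      then show ?case using insert by (auto intro: spn_step)
    qed
  qed
  show "spn R G \<subseteq> lin_span R G"
  proof (rule spn_min)
    show "0 \<in> lin_span R G" unfolding lin_span_def using assms(2)
      by (auto intro!: exI[of _ "\<lambda>_. 0"])
    show "\<forall>r\<in>R. \<forall>g\<in>G. \<forall>x\<in>lin_span R G. r * g + x \<in> lin_span R G"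
    proof (intro ballI)
      fix r g x assume r: "r \<in> R" and g: "g \<in> G" and x: "x \<in> lin_span R G"
      then obtain c where c: "\<forall>h\<in>G. c h \<in> R" "x = (\<Sum>h\<in>G. c h * h)" unfolding lin_span_def by auto
      define c' where "c' = c(g := r + c g)"
      have "(\<Sum>h\<in>G. c' h * h) = c' g * g + (\<Sum>h\<in>G-{g}. c' h * h)"
        using assms(1) g by (simp add: sum.remove)
      also have "(\<Sum>h\<in>G-{g}. c' h * h) = (\<Sum>h\<in>G-{g}. c h * h)" unfolding c'_def by (rule sum.cong) auto
      also have "c' g * g = r*g + c g * g" unfolding c'_def by (simp add: distrib_right)
      also have "(\<Sum>h\<in>G. c h * h) = c g * g + (\<Sum>h\<in>G-{g}. c h * h)"
        using assms(1) g by (simp add: sum.remove)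
      ultimately have "r*g + x = (\<Sum>h\<in>G. c' h * h)" using c by (simp add: add.assoc)
      moreover have "\<forall>h\<in>G. c' h \<in> R" using c r g assms(3) unfolding c'_def by auto
      ultimately show "r * g + x \<in> lin_span R G" unfolding lin_span_def
        by (intro CollectI exI[of _ c']) simp
    qed
  qed
qed

lemma ring_centerI: "(\<And>x. z*x = x*z) \<Longrightarrow> z \<in> ring_center" by (simp add: ring_center_def)
lemma ring_centerD: "z \<in> ring_center \<Longrightarrow> z*x = x*z" by (simp add: ring_center_def)

lemma center_add: "a \<in> ring_center \<Longrightarrow> b \<in> ring_center \<Longrightarrow> a+b \<in> ring_center"
  by (rule ring_centerI) (simp add: distrib_left distrib_right ring_centerD)
lemma center_mult: "a \<in> ring_center \<Longrightarrow> b \<in> ring_center \<Longrightarrow> a*b \<in> ring_center"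
proof (rule ring_centerI)
  fix x assume ab: "a \<in> ring_center" "b \<in> ring_center"
  have "a*b*x = a*(x*b)" using ring_centerD[OF ab(2), of x] by (simp add: mult.assoc)
  also have "\<dots> = (a*x)*b" by (simp add: mult.assoc)
  also have "\<dots> = x*(a*b)" using ring_centerD[OF ab(1), of x] by (simp add: mult.assoc)
  finally show "a*b*x = x*(a*b)" .
qed
lemma center_neg: "a \<in> ring_center \<Longrightarrow> -a \<in> ring_center"
  by (rule ring_centerI) (simp add: ring_centerD)
lemma center_diff: "a \<in> ring_center \<Longrightarrow> b \<in> ring_center \<Longrightarrow> a-b \<in> ring_center"
  by (rule ring_centerI) (simp add: left_diff_distrib right_diff_distrib ring_centerD)
lemma center_of_int: "of_int k \<in> ring_center"
  by (rule ring_centerI) (simp add: mult_of_int_commute)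
lemma center_0: "0 \<in> ring_center" by (rule ring_centerI) simp
lemma center_1: "1 \<in> ring_center" by (rule ring_centerI) simp
lemma center_power: "a \<in> ring_center \<Longrightarrow> a^n \<in> ring_center"
  by (induct n) (auto simp: center_1 center_mult)

lemma subring_center: "is_subring ring_center"
  unfolding is_subring_def by (auto simp: center_0 center_1 center_add center_diff center_mult)

lemma spn_center: assumes "R \<subseteq> ring_center" "G \<subseteq> ring_center" shows "spn R G \<subseteq> ring_center"
  by (rule spn_min) (use assms in \<open>auto intro: center_add center_mult center_0\<close>)

lemma spn_mult: assumes "is_subring R" "R \<subseteq> ring_center" "\<forall>g\<in>G. \<forall>h\<in>G. g*h \<in> spn R G"
  and "x \<in> spn R G" "y \<in> spn R G" shows "x*y \<in> spn R G"
proof -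
  have mc: "\<forall>a\<in>R. \<forall>b\<in>R. a*b \<in> R" using assms(1) unfolding is_subring_def by blast
  have inner: "g*y \<in> spn R G" if g: "g \<in> G" and y: "y \<in> spn R G" for g y
    using y
  proof (induct rule: spn.induct)
    case spn_zero then show ?case by (simp add: spn.spn_zero)
  next
    case (spn_step r h y0)
    have "g*(r*h + y0) = r*(g*h) + g*y0"
      using ring_centerD[of r g] spn_step(1) assms(2) by (auto simp: distrib_left mult.assoc[symmetric])
    then show ?case using spn_step g assms(3) spn_smult[OF mc] spn_add by metis
  qed
  from assms(4) show ?thesis
  proof (induct rule: spn.induct)
    case spn_zero then show ?case by (simp add: spn.spn_zero)
  next
    case (spn_step r g x0)
    have "(r*g + x0)*y = r*(g*y) + x0*y" by (simp add: distrib_right mult.assoc)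
    then show ?case using spn_step inner assms(5) spn_smult[OF mc] spn_add by metis
  qed
qed

lemma spn_tower: assumes "is_subring R" "is_subring R'" "R \<subseteq> R'" "H \<subseteq> R'" "R' \<subseteq> spn R H"
  shows "spn R' G = spn R ((\<lambda>p. fst p * snd p) ` (H \<times> G))"
proof
  let ?HG = "(\<lambda>p. fst p * snd p) ` (H \<times> G)"
  have mc: "\<forall>a\<in>R. \<forall>b\<in>R. a*b \<in> R" using assms(1) unfolding is_subring_def by blast
  have mc': "\<forall>a\<in>R'. \<forall>b\<in>R'. a*b \<in> R'" using assms(2) unfolding is_subring_def by blast
  have one: "1 \<in> R" using assms(1) unfolding is_subring_def by blast
  have step: "r'*g \<in> spn R ?HG" if "r' \<in> spn R H" "g \<in> G" for r' g
    using that(1)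
  proof (induct rule: spn.induct)
    case spn_zero then show ?case by (simp add: spn.spn_zero)
  next
    case (spn_step r h y)
    have "(r*h+y)*g = r*(h*g) + y*g" by (simp add: distrib_right mult.assoc)
    moreover have "h*g \<in> ?HG" using spn_step that(2) by force
    ultimately show ?case using spn_step by (auto intro: spn.spn_step)
  qed
  show "spn R' G \<subseteq> spn R ?HG"
  proof (rule spn_min)
    show "0 \<in> spn R ?HG" by (rule spn_zero)
    show "\<forall>r\<in>R'. \<forall>g\<in>G. \<forall>x\<in>spn R ?HG. r * g + x \<in> spn R ?HG"
      using step assms(5) spn_add by blast
  qed
  show "spn R ?HG \<subseteq> spn R' G"
  proof (rule spn_min)
    show "0 \<in> spn R' G" by (rule spn_zero)
    show "\<forall>r\<in>R. \<forall>g\<in>?HG. \<forall>x\<in>spn R' G. r * g + x \<in> spn R' G"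
    proof (intro ballI)
      fix r g x assume r: "r \<in> R" and g: "g \<in> ?HG" and x: "x \<in> spn R' G"
      then obtain h g' where hg: "h \<in> H" "g' \<in> G" "g = h*g'" by auto
      have "r*g + x = (r*h)*g' + x" using hg by (simp add: mult.assoc)
      moreover have "r*h \<in> R'" using r hg assms(3,4) mc' by blast
      ultimately show "r * g + x \<in> spn R' G" using hg x by (auto intro: spn.spn_step)
    qed
  qed
qed



definition Noeth :: "'a::ring_1 set \<Rightarrow> bool" where
  "Noeth R \<longleftrightarrow> (\<forall>G N. finite G \<longrightarrow> is_submodule R (spn R G) N \<longrightarrow>
      (\<exists>F. finite F \<and> F \<subseteq> N \<and> N = spn R F))"

lemma submod_spn_le: assumes "is_submodule R M N" "G \<subseteq> N" shows "spn R G \<subseteq> N"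
  by (rule spn_min) (use assms in \<open>auto simp: is_submodule_def\<close>)

lemma submod_neg: assumes "is_subring R" "is_submodule R M N" "x \<in> N" shows "-x \<in> N"
proof -
  have "(0-1) \<in> R" using assms(1) unfolding is_subring_def by blast
  then have "(0-1)*x \<in> N" using assms(2,3) unfolding is_submodule_def by blast
  then show ?thesis by simp
qed

lemma submod_diff: assumes "is_subring R" "is_submodule R M N" "x \<in> N" "y \<in> N" shows "x - y \<in> N"
  using submod_neg[OF assms(1,2,4)] assms(2,3) unfolding is_submodule_def by (metis diff_conv_add_uminus)

lemma noeth_from_ideals:
  assumes sr: "is_subring R"
    and ideals: "\<And>I. is_submodule R R I \<Longrightarrow> (\<exists>F. finite F \<and> F \<subseteq> I \<and> I = spn R F)"
  shows "Noeth R"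
  unfolding Noeth_def
proof (intro allI impI)
  have z: "0 \<in> R" and ad: "\<forall>a\<in>R. \<forall>b\<in>R. a+b \<in> R" and mc: "\<forall>a\<in>R. \<forall>b\<in>R. a*b \<in> R"
    and one: "1 \<in> R"
    using sr unfolding is_subring_def by auto
  fix G :: "'a set" and N assume fin: "finite G"
  then show "is_submodule R (spn R G) N \<Longrightarrow> \<exists>F. finite F \<and> F \<subseteq> N \<and> N = spn R F"
  proof (induct G arbitrary: N rule: finite_induct)
    case empty
    then have "N = {0}" unfolding is_submodule_def spn_empty by auto
    then show ?case using spn_empty[of R] by auto
  next
    case (insert g G N)
    note sub = insert(4)
    have NM: "N \<subseteq> spn R (insert g G)" and N0: "0 \<in> N" and Nadd: "\<forall>x\<in>N. \<forall>y\<in>N. x+y \<in> N"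
      and Nmul: "\<forall>c\<in>R. \<forall>x\<in>N. c*x \<in> N" using sub unfolding is_submodule_def by auto
    define I where "I = {r \<in> R. \<exists>m \<in> spn R G. r*g + m \<in> N}"
    have "is_submodule R R I" unfolding is_submodule_def
    proof (intro conjI ballI)
      show "I \<subseteq> R" unfolding I_def by auto
      show "0 \<in> I" unfolding I_def using z N0 spn_zero[of R G] by force
      fix x y assume "x \<in> I" "y \<in> I"
      then obtain m1 m2 where h: "x \<in> R" "y \<in> R" "m1 \<in> spn R G" "m2 \<in> spn R G"
        "x*g+m1 \<in> N" "y*g+m2 \<in> N" unfolding I_def by auto
      have e: "(x+y)*g + (m1+m2) = (x*g+m1) + (y*g+m2)" by (simp add: algebra_simps)
      have "x+y \<in> R" using ad h by blast
      moreover have "m1+m2 \<in> spn R G" using h spn_add by blast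
      moreover have "(x+y)*g + (m1+m2) \<in> N" unfolding e using Nadd h by blast
      ultimately show "x + y \<in> I" unfolding I_def by blast
    next
      fix c x assume c: "c \<in> R" and "x \<in> I"
      then obtain m where h: "x \<in> R" "m \<in> spn R G" "x*g+m \<in> N" unfolding I_def by auto
      have e: "(c*x)*g + c*m = c*(x*g+m)" by (simp add: algebra_simps)
      have "c*x \<in> R" using mc c h by blast
      moreover have "c*m \<in> spn R G" using spn_smult[OF mc c h(2)] .
      moreover have "(c*x)*g + c*m \<in> N" unfolding e using Nmul c h by blast
      ultimately show "c * x \<in> I" unfolding I_def by blast
    qed
    then obtain F where F: "finite F" "F \<subseteq> I" "I = spn R F" using ideals by blast
    define N0 where "N0 = N \<inter> spn R G"
    have "is_submodule R (spn R G) N0" unfolding is_submodule_def N0_def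
      using N0 Nadd Nmul spn_zero[of R G] spn_add[of _ R G] spn_smult[OF mc] by auto
    then obtain F0 where F0: "finite F0" "F0 \<subseteq> N0" "N0 = spn R F0" using insert(3) by blast
    have "\<forall>f\<in>F. \<exists>m. m \<in> spn R G \<and> f*g + m \<in> N" using F(2) unfolding I_def by blast
    then obtain m where m: "\<And>f. f \<in> F \<Longrightarrow> m f \<in> spn R G \<and> f*g + m f \<in> N" by metis
    define P where "P = (\<lambda>f. f*g + m f) ` F"
    have PN: "P \<subseteq> N" unfolding P_def using m by auto
    have key: "\<exists>z\<in>spn R P. \<exists>m'\<in>spn R G. z = r*g + m'" if "r \<in> spn R F" for r
      using that
    proof (induct rule: spn.induct)
      case spn_zero
      show ?case by (rule bexI[of _ 0], rule bexI[of _ 0]) (auto intro: spn.spn_zero)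
    next
      case (spn_step c f r0)
      then obtain z0 m0 where zm: "z0 \<in> spn R P" "m0 \<in> spn R G" "z0 = r0*g + m0" by blast
      have e: "c*(f*g + m f) + z0 = (c*f + r0)*g + (c * m f + m0)" using zm by (simp add: algebra_simps)
      have fP: "f*g + m f \<in> P" unfolding P_def using spn_step(2) by blast
      have a: "c*(f*g + m f) + z0 \<in> spn R P" by (rule spn.spn_step[OF spn_step(1) fP zm(1)])
      have mf: "m f \<in> spn R G" using m spn_step(2) by blast
      have b: "c * m f + m0 \<in> spn R G" by (rule spn_add[OF spn_smult[OF mc spn_step(1) mf] zm(2)])
      show ?case by (rule bexI[OF _ a], rule bexI[OF _ b], rule e)
    qed
    have "N = spn R (F0 \<union> P)"
    proof
      have "F0 \<union> P \<subseteq> N" using F0(2) PN unfolding N0_def by blast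
      then show "spn R (F0 \<union> P) \<subseteq> N" by (rule submod_spn_le[OF sub])
      show "N \<subseteq> spn R (F0 \<union> P)"
      proof
        fix n assume n: "n \<in> N"
        then have "n \<in> spn R (insert g G)" using NM by blast
        then obtain r m0 where rm: "r \<in> R" "m0 \<in> spn R G" "n = r*g + m0" using spn_insert[OF z ad] by blast
        then have "r \<in> I" unfolding I_def using n by blast
        then obtain z m' where zm: "z \<in> spn R P" "m' \<in> spn R G" "z = r*g + m'" using key F(3) by blast
        have zN: "z \<in> N" using zm(1) submod_spn_le[OF sub PN] by blast
        have "n - z = m0 - m'" using rm zm by simp
        then have "n - z \<in> N0" unfolding N0_def using submod_diff[OF sr sub n zN] spn_diff[OF sr rm(2) zm(2)] by simp
        then have "n - z \<in> spn R (F0 \<union> P)" using F0(3) spn_mono[of R R F0 "F0 \<union> P"] by blast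
        moreover have "z \<in> spn R (F0 \<union> P)" using zm(1) spn_mono[of R R P "F0 \<union> P"] by blast
        ultimately have "(n - z) + z \<in> spn R (F0 \<union> P)" by (rule spn_add)
        then show "n \<in> spn R (F0 \<union> P)" by simp
      qed
    qed
    moreover have "finite (F0 \<union> P)" using F0 F unfolding P_def by auto
    moreover have "F0 \<union> P \<subseteq> N" using F0 PN unfolding N0_def by auto
    ultimately show ?case by blast
  qed
qed



definition pw :: "'a::ring_1 \<Rightarrow> nat \<Rightarrow> 'a set" where "pw x d = (\<lambda>i. x^i) ` {..<d}"
definition padj :: "'a::ring_1 set \<Rightarrow> 'a \<Rightarrow> 'a set" where "padj R x = {p. \<exists>d. p \<in> spn R (pw x d)}"

lemma pw_finite: "finite (pw x d)" unfolding pw_def by simp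
lemma pw_mono: "d \<le> d' \<Longrightarrow> spn R (pw x d) \<subseteq> spn R (pw x d')"
  by (rule spn_mono) (auto simp: pw_def)
lemma pw_Suc: "pw x (Suc d) = insert (x^d) (pw x d)" unfolding pw_def by (auto simp: lessThan_Suc)
lemma pw_0: "spn R (pw x 0) = {0}" unfolding pw_def using spn_empty by simp
lemma pw_center: "x \<in> ring_center \<Longrightarrow> pw x d \<subseteq> ring_center" unfolding pw_def using center_power by blast
lemma pw_mem: "i < d \<Longrightarrow> x^i \<in> pw x d" unfolding pw_def by blast

context
  fixes R :: "'a::ring_1 set" and x :: 'a
  assumes sr: "is_subring R" and Rc: "R \<subseteq> ring_center" and xc: "x \<in> ring_center"
begin

lemma mcR: "\<forall>a\<in>R. \<forall>b\<in>R. a*b \<in> R" using sr unfolding is_subring_def by blast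
lemma oneR: "1 \<in> R" using sr unfolding is_subring_def by blast
lemma zeroR: "0 \<in> R" using sr unfolding is_subring_def by blast

lemma pw_shift: "q \<in> spn R (pw x d) \<Longrightarrow> x^i * q \<in> spn R (pw x (i+d))"
proof (induct rule: spn.induct)
  case spn_zero then show ?case by (simp add: spn.spn_zero)
next
  case (spn_step r g q0)
  then obtain j where j: "j < d" "g = x^j" unfolding pw_def by auto
  have rc: "r * x^i = x^i * r" using ring_centerD[of r "x^i"] spn_step(1) Rc by blast
  have "x^i * (r*g + q0) = r*x^(i+j) + x^i*q0"
    using j by (simp add: distrib_left power_add mult.assoc[symmetric] rc)
  moreover have "x^(i+j) \<in> pw x (i+d)" using j by (intro pw_mem) simp
  ultimately show ?case using spn_step by (auto intro: spn.spn_step)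
qed

lemma pw_mult: assumes "p \<in> spn R (pw x d1)" and qd: "q \<in> spn R (pw x d2)" shows "p*q \<in> spn R (pw x (d1+d2))"
  using assms(1)
proof (induct rule: spn.induct)
  case spn_zero then show ?case by (simp add: spn.spn_zero)
next
  case (spn_step r g p0)
  then obtain i where i: "i < d1" "g = x^i" unfolding pw_def by auto
  have "(r*g + p0)*q = r*(x^i*q) + p0*q" using i by (simp add: distrib_right mult.assoc)
  moreover have "x^i*q \<in> spn R (pw x (d1+d2))"
    using pw_shift[OF qd, of i] pw_mono[of "i+d2" "d1+d2" R x] i by auto
  ultimately show ?case using spn_step spn_add spn_smult[OF mcR] by metis
qed

lemma padj_subring: "is_subring (padj R x)"
  unfolding is_subring_def
proof (intro conjI ballI)
  show "0 \<in> padj R x" unfolding padj_def using spn_zero by blast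
  have "1 \<in> spn R (pw x 1)" using spn_gen[OF oneR, of 1 "pw x 1"] pw_mem[of 0 1 x] by simp
  then show "1 \<in> padj R x" unfolding padj_def by blast
  fix a b assume "a \<in> padj R x" "b \<in> padj R x"
  then obtain d1 d2 where d: "a \<in> spn R (pw x d1)" "b \<in> spn R (pw x d2)" unfolding padj_def by blast
  then have a: "a \<in> spn R (pw x (d1+d2))" and b: "b \<in> spn R (pw x (d1+d2))"
    using pw_mono[of d1 "d1+d2" R x] pw_mono[of d2 "d1+d2" R x] by auto
  show "a + b \<in> padj R x" unfolding padj_def using spn_add[OF a b] by blast
  show "a - b \<in> padj R x" unfolding padj_def using spn_diff[OF sr a b] by blast
  show "a * b \<in> padj R x" unfolding padj_def using pw_mult[OF d] by blast
qed

lemma R_padj: "R \<subseteq> padj R x"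
proof
  fix r assume "r \<in> R"
  then have "r * x^0 + 0 \<in> spn R (pw x 1)" using pw_mem[of 0 1 x] by (intro spn_step spn_zero) auto
  then show "r \<in> padj R x" unfolding padj_def by auto
qed

lemma pow_padj: "x^k \<in> padj R x"
  using spn_gen[OF oneR pw_mem[of k "Suc k" x]] unfolding padj_def by blast

lemma x_padj: "x \<in> padj R x" using pow_padj[of 1] by simp

lemma padj_center: "padj R x \<subseteq> ring_center"
  unfolding padj_def using spn_center[OF Rc pw_center[OF xc]] by blast

lemma padj_min: "R \<subseteq> X \<Longrightarrow> x \<in> X \<Longrightarrow> is_subring X \<Longrightarrow> padj R x \<subseteq> X"
proof
  fix p assume X: "R \<subseteq> X" "x \<in> X" "is_subring X" and "p \<in> padj R x"
  then obtain d where "p \<in> spn R (pw x d)" unfolding padj_def by blast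
  have pX: "x^i \<in> X" for i
    by (induct i) (use X in \<open>auto simp: is_subring_def\<close>)
  have "spn R (pw x d) \<subseteq> X"
    by (rule spn_min) (use X pX in \<open>auto simp: is_subring_def pw_def\<close>)
  then show "p \<in> X" using \<open>p \<in> spn R (pw x d)\<close> by blast
qed

end



lemma hilbert:
  fixes R :: "'a::ring_1 set" and x :: 'a
  assumes sr: "is_subring R" and Rc: "R \<subseteq> ring_center" and xc: "x \<in> ring_center"
    and NR: "Noeth R"
  shows "Noeth (padj R x)"
proof (rule noeth_from_ideals[OF padj_subring[OF sr Rc xc]])
  let ?P = "padj R x"
  have mc: "\<forall>a\<in>R. \<forall>b\<in>R. a*b \<in> R" and ad: "\<forall>a\<in>R. \<forall>b\<in>R. a+b \<in> R" and z: "0 \<in> R" and one: "1 \<in> R"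
    using sr unfolding is_subring_def by auto
  have srP: "is_subring ?P" by (rule padj_subring[OF sr Rc xc])
  have mcP: "\<forall>a\<in>?P. \<forall>b\<in>?P. a*b \<in> ?P" using srP unfolding is_subring_def by blast
  have RP: "R \<subseteq> ?P" by (rule R_padj[OF sr Rc xc])
  fix I assume Isub: "is_submodule ?P ?P I"
  have IP: "I \<subseteq> ?P" and I0: "0 \<in> I" and Iadd: "\<forall>a\<in>I. \<forall>b\<in>I. a+b \<in> I"
    and Imul: "\<forall>c\<in>?P. \<forall>a\<in>I. c*a \<in> I" using Isub unfolding is_submodule_def by auto
  define Pd where "Pd d = spn R (pw x d)" for d
  define L where "L d = {r \<in> R. \<exists>q \<in> Pd d. r*x^d + q \<in> I}" for d
  have Lsub: "is_submodule R R (L d)" for d unfolding is_submodule_def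
  proof (intro conjI ballI)
    show "L d \<subseteq> R" unfolding L_def by auto
    have "0 * x^d + 0 \<in> I" using I0 by simp
    then show "0 \<in> L d" unfolding L_def Pd_def using z spn_zero by blast
    fix a b assume "a \<in> L d" "b \<in> L d"
    then obtain q1 q2 where h: "a \<in> R" "b \<in> R" "q1 \<in> Pd d" "q2 \<in> Pd d" "a*x^d+q1 \<in> I" "b*x^d+q2 \<in> I"
      unfolding L_def by auto
    have e: "(a+b)*x^d + (q1+q2) = (a*x^d+q1) + (b*x^d+q2)" by (simp add: algebra_simps)
    have "a+b \<in> R" using ad h by blast
    moreover have "q1+q2 \<in> Pd d" using h spn_add unfolding Pd_def by blast
    moreover have "(a+b)*x^d + (q1+q2) \<in> I" unfolding e using Iadd h by blast
    ultimately show "a + b \<in> L d" unfolding L_def by blast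
  next
    fix c a assume c: "c \<in> R" and "a \<in> L d"
    then obtain q where h: "a \<in> R" "q \<in> Pd d" "a*x^d+q \<in> I" unfolding L_def by auto
    have e: "(c*a)*x^d + c*q = c*(a*x^d+q)" by (simp add: algebra_simps)
    have "c*a \<in> R" using mc c h by blast
    moreover have "c*q \<in> Pd d" using spn_smult[OF mc c] h unfolding Pd_def by blast
    moreover have "(c*a)*x^d + c*q \<in> I" unfolding e using Imul c h RP by blast
    ultimately show "c * a \<in> L d" unfolding L_def by blast
  qed
  have LSuc: "L d \<subseteq> L (Suc d)" for d
  proof
    fix r assume "r \<in> L d"
    then obtain q where h: "r \<in> R" "q \<in> Pd d" "r*x^d+q \<in> I" unfolding L_def by auto
    have rc: "x * r = r * x" using ring_centerD[of r x] h(1) Rc by auto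
    have e: "x*(r*x^d+q) = r*x^(Suc d) + x*q"
      by (simp add: distrib_left mult.assoc[symmetric] rc)
    have "x \<in> ?P" by (rule x_padj[OF sr Rc xc])
    then have "r*x^(Suc d) + x*q \<in> I" using Imul h(3) unfolding e[symmetric] by blast
    moreover have "x*q \<in> Pd (Suc d)" using pw_shift[OF sr Rc xc h(2)[unfolded Pd_def], of 1] unfolding Pd_def by simp
    ultimately show "r \<in> L (Suc d)" unfolding L_def using h(1) by blast
  qed
  have Lmono: "d \<le> d' \<Longrightarrow> L d \<subseteq> L d'" for d d'
    using lift_Suc_mono_le[of L d d'] LSuc by blast
  define Lall where "Lall = (\<Union>d. L d)"
  have "is_submodule R R Lall" unfolding is_submodule_def
  proof (intro conjI ballI)
    show "Lall \<subseteq> R" unfolding Lall_def using Lsub unfolding is_submodule_def by blast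
    show "0 \<in> Lall" unfolding Lall_def using Lsub unfolding is_submodule_def by blast
    fix a b assume "a \<in> Lall" "b \<in> Lall"
    then obtain d1 d2 where "a \<in> L d1" "b \<in> L d2" unfolding Lall_def by blast
    then have "a \<in> L (d1+d2)" "b \<in> L (d1+d2)" using Lmono[of d1 "d1+d2"] Lmono[of d2 "d1+d2"] by auto
    then have "a+b \<in> L (d1+d2)" using Lsub unfolding is_submodule_def by blast
    then show "a+b \<in> Lall" unfolding Lall_def by blast
  next
    fix c a assume "c \<in> R" "a \<in> Lall"
    then obtain d where "a \<in> L d" unfolding Lall_def by blast
    then have "c*a \<in> L d" using Lsub \<open>c \<in> R\<close> unfolding is_submodule_def by blast
    then show "c*a \<in> Lall" unfolding Lall_def by blast
  qed
  then have "is_submodule R (spn R {1}) Lall" using spn_one[OF sr] by simp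
  then obtain F where F: "finite F" "F \<subseteq> Lall" "Lall = spn R F"
    using NR unfolding Noeth_def by (meson finite.emptyI finite.insertI)
  have "\<forall>f\<in>F. \<exists>d. f \<in> L d" using F(2) unfolding Lall_def by blast
  then obtain df where df: "\<And>f. f \<in> F \<Longrightarrow> f \<in> L (df f)" by metis
  define D where "D = Max (insert 0 (df ` F))"
  have "df f \<le> D" if "f \<in> F" for f unfolding D_def using F(1) that by (intro Max_ge) auto
  then have FD: "F \<subseteq> L D" using df Lmono by blast
  have LallD: "Lall \<subseteq> L D" unfolding F(3) by (rule submod_spn_le[OF Lsub FD])
  have "\<forall>f\<in>F. \<exists>q. q \<in> Pd D \<and> f*x^D + q \<in> I" using FD unfolding L_def by blast
  then obtain qf where qf: "\<And>f. f \<in> F \<Longrightarrow> qf f \<in> Pd D \<and> f*x^D + qf f \<in> I" by metis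
  define pf where "pf f = f*x^D + qf f" for f
  define N1 where "N1 = I \<inter> Pd (Suc D)"
  have "is_submodule R (spn R (pw x (Suc D))) N1" unfolding is_submodule_def N1_def Pd_def
    using I0 Iadd Imul RP spn_zero[of R] spn_add[of _ R] spn_smult[OF mc] by auto
  then obtain H where H: "finite H" "H \<subseteq> N1" "N1 = spn R H"
    using NR pw_finite unfolding Noeth_def by blast
  define K where "K = H \<union> pf ` F"
  have KI: "K \<subseteq> I" using H(2) qf unfolding K_def pf_def N1_def by auto
  have "I = spn ?P K"
  proof
    show "spn ?P K \<subseteq> I" by (rule submod_spn_le[OF Isub KI])
    have claim: "\<forall>p. p \<in> I \<longrightarrow> p \<in> Pd d \<longrightarrow> p \<in> spn ?P K" for d
    proof (induct d)
      case 0
      have "Pd 0 = {0}" unfolding Pd_def by (rule pw_0)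
      then show ?case using spn_zero[of ?P K] by simp
    next
      case (Suc d')
      show ?case
      proof (intro allI impI)
        fix p assume pI: "p \<in> I" and pd: "p \<in> Pd (Suc d')"
        show "p \<in> spn ?P K"
        proof (cases "d' \<le> D")
          case True
          then have "p \<in> Pd (Suc D)" using pd pw_mono[of "Suc d'" "Suc D" R x] unfolding Pd_def by auto
          then have "p \<in> spn R H" using pI H(3) unfolding N1_def by blast
          then show ?thesis using spn_mono[OF RP, of H K] unfolding K_def by blast
        next
          case False
          then have Dd: "D < d'" by simp
          from pd obtain r q where rq: "r \<in> R" "q \<in> Pd d'" "p = r*x^d' + q"
            unfolding Pd_def pw_Suc spn_insert[OF z ad] by blast
          then have "r \<in> L d'" unfolding L_def using pI by blast
          then have "r \<in> spn R F" using F(3) unfolding Lall_def by blast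
          then have "\<exists>zz\<in>spn ?P (pf ` F). \<exists>q'\<in>Pd d'. zz = r*x^d' + q'"
          proof (induct rule: spn.induct)
            case spn_zero
            have "(0::'a) \<in> Pd d'" unfolding Pd_def by (rule spn.spn_zero)
            then show ?case by (intro bexI[of _ 0] bexI[of _ 0]) (auto intro: spn.spn_zero)
          next
            case (spn_step c f r0)
            then obtain z0 q0 where zq: "z0 \<in> spn ?P (pf ` F)" "q0 \<in> Pd d'" "z0 = r0*x^d' + q0" by blast
            define k where "k = d' - D"
            have kD: "k + D = d'" unfolding k_def using Dd by simp
            have fc: "x^k * f = f * x^k"
              using ring_centerD[of "x^k" f] center_power[OF xc] by simp
            have e1: "(c*x^k) * (f*x^D) = (c*f)*x^d'"
            proof -
              have "(c*x^k) * (f*x^D) = c*((x^k*f)*x^D)" by (simp add: mult.assoc)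
              also have "\<dots> = (c*f)*(x^k*x^D)" unfolding fc by (simp add: mult.assoc)
              also have "\<dots> = (c*f)*x^d'" using kD by (simp add: power_add[symmetric])
              finally show ?thesis .
            qed
            have e: "(c*x^k) * pf f + z0 = (c*f + r0)*x^d' + (c*(x^k * qf f) + q0)"
              unfolding pf_def zq(3) using e1 by (simp add: algebra_simps)
            have ckP: "c*x^k \<in> ?P" using mcP RP spn_step(1) pow_padj[OF sr Rc xc] by blast
            have a: "(c*x^k) * pf f + z0 \<in> spn ?P (pf ` F)"
              using spn_step(2) zq(1) ckP by (auto intro: spn.spn_step)
            have "x^k * qf f \<in> Pd (k + D)" using pw_shift[OF sr Rc xc, of "qf f" D k] qf[OF spn_step(2)]
              unfolding Pd_def by blast
            then have "c*(x^k * qf f) \<in> Pd d'" using kD spn_smult[OF mc spn_step(1)] unfolding Pd_def by metis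
            then have b: "c*(x^k * qf f) + q0 \<in> Pd d'" using zq(2) spn_add unfolding Pd_def by blast
            show ?case by (rule bexI[OF _ a], rule bexI[OF _ b], rule e)
          qed
          then obtain zz q' where zq: "zz \<in> spn ?P (pf ` F)" "q' \<in> Pd d'" "zz = r*x^d' + q'" by blast
          have zzI: "zz \<in> I" using zq(1) submod_spn_le[OF Isub] KI unfolding K_def by blast
          have "p - zz = q - q'" using rq zq by simp
          then have "p - zz \<in> Pd d'" using spn_diff[OF sr rq(2)[unfolded Pd_def] zq(2)[unfolded Pd_def]] unfolding Pd_def by simp
          moreover have "p - zz \<in> I" using submod_diff[OF srP Isub pI zzI] .
          ultimately have "p - zz \<in> spn ?P K" using Suc by blast
          moreover have "zz \<in> spn ?P K" using zq(1) spn_mono[of ?P ?P "pf ` F" K] unfolding K_def by blast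
          ultimately have "(p - zz) + zz \<in> spn ?P K" by (rule spn_add)
          then show ?thesis by simp
        qed
      qed
    qed
    show "I \<subseteq> spn ?P K"
    proof
      fix p assume "p \<in> I"
      then obtain d where "p \<in> Pd d" using IP unfolding padj_def Pd_def by blast
      then show "p \<in> spn ?P K" using claim \<open>p \<in> I\<close> by blast
    qed
  qed
  moreover have "finite K" unfolding K_def using H(1) F(1) by simp
  ultimately show "\<exists>F. finite F \<and> F \<subseteq> I \<and> I = spn ?P F" using KI by blast
qed



definition Zr :: "'a::ring_1 set" where "Zr = range of_int"

lemma Zr_subring: "is_subring (Zr::'a::ring_1 set)"
  unfolding is_subring_def Zr_def
proof (intro conjI ballI)
  show "0 \<in> range (of_int::int\<Rightarrow>'a)" by (rule range_eqI[of _ _ 0]) simp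
  show "1 \<in> range (of_int::int\<Rightarrow>'a)" by (rule range_eqI[of _ _ 1]) simp
  fix x y :: 'a assume "x \<in> range of_int" "y \<in> range of_int"
  then obtain a b where ab: "x = of_int a" "y = of_int b" by auto
  show "x + y \<in> range of_int" unfolding ab by (rule range_eqI[of _ _ "a+b"]) simp
  show "x - y \<in> range of_int" unfolding ab by (rule range_eqI[of _ _ "a-b"]) simp
  show "x * y \<in> range of_int" unfolding ab by (rule range_eqI[of _ _ "a*b"]) simp
qed

lemma Zr_center: "Zr \<subseteq> ring_center" unfolding Zr_def using center_of_int by blast

lemma Zr_min: "is_subring X \<Longrightarrow> (Zr::'a::ring_1 set) \<subseteq> X"
proof
  fix z :: 'a assume X: "is_subring X" and "z \<in> Zr"
  then obtain k where k: "z = of_int k" unfolding Zr_def by auto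
  have "of_int k \<in> X" for k :: int
  proof (induct k rule: int_induct[of _ 0])
    case base then show ?case using X by (simp add: is_subring_def)
  next
    case (step1 i) then show ?case using X by (simp add: is_subring_def)
  next
    case (step2 i) then show ?case using X by (simp add: is_subring_def)
  qed
  then show "z \<in> X" using k by simp
qed

lemma Zr_noeth: "Noeth (Zr::'a::ring_1 set)"
proof (rule noeth_from_ideals[OF Zr_subring])
  fix I :: "'a set" assume Isub: "is_submodule Zr Zr I"
  have IZ: "I \<subseteq> Zr" and I0: "0 \<in> I" and Iadd: "\<forall>a\<in>I. \<forall>b\<in>I. a+b \<in> I"
    and Imul: "\<forall>c\<in>Zr. \<forall>a\<in>I. c*a \<in> I" using Isub unfolding is_submodule_def by auto
  define J where "J = {k::int. (of_int k::'a) \<in> I}"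
  have Jmul: "k \<in> J \<Longrightarrow> l * k \<in> J" for k l
    using Imul unfolding J_def Zr_def by (auto simp: of_int_mult)
  have Jadd: "k \<in> J \<Longrightarrow> l \<in> J \<Longrightarrow> k + l \<in> J" for k l
    using Iadd unfolding J_def by (auto simp: of_int_add)
  have Iof: "\<And>i. i \<in> I \<Longrightarrow> \<exists>k\<in>J. i = of_int k" using IZ unfolding J_def Zr_def by auto
  show "\<exists>F. finite F \<and> F \<subseteq> I \<and> I = spn Zr F"
  proof (cases "\<exists>k\<in>J. k \<noteq> 0")
    case False
    then have "I = {0}" using I0 Iof by force
    then show ?thesis using spn_empty[of Zr] by (intro exI[of _ "{}"]) auto
  next
    case True
    then obtain k where k: "k \<in> J" "k \<noteq> 0" by blast
    then have "\<exists>n::nat. n > 0 \<and> int n \<in> J"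
    proof (cases "k > 0")
      case True then show ?thesis using k by (intro exI[of _ "nat k"]) auto
    next
      case False
      have "(-1)*k \<in> J" by (rule Jmul[OF k(1)])
      then have "-k \<in> J" "-k > 0" using False k(2) by simp_all
      then show ?thesis by (intro exI[of _ "nat (-k)"]) auto
    qed
    define n where "n = (LEAST n::nat. n > 0 \<and> int n \<in> J)"
    have n: "n > 0" "int n \<in> J" using LeastI_ex[OF \<open>\<exists>n::nat. n > 0 \<and> int n \<in> J\<close>] unfolding n_def by auto
    define g where "g = int n"
    have gpos: "g > 0" unfolding g_def using n by simp
    have dvd: "k = (k div g) * g" if "k \<in> J" for k
    proof -
      have "k mod g = k + (- (k div g)) * g" by (simp add: minus_div_mult_eq_mod[symmetric])
      then have mJ: "k mod g \<in> J" using Jadd Jmul that n(2) unfolding g_def by metis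
      have "k mod g = 0"
      proof (rule ccontr)
        assume "k mod g \<noteq> 0"
        then have mpos: "k mod g > 0" using gpos by (simp add: order_le_neq_trans)
        then have "nat (k mod g) > 0 \<and> int (nat (k mod g)) \<in> J" using mJ by simp
        then have "n \<le> nat (k mod g)" unfolding n_def by (rule Least_le)
        then have "int n \<le> k mod g" using le_nat_iff[of "k mod g" n] mpos by simp
        moreover have "k mod g < g" using gpos by simp
        ultimately show False unfolding g_def by linarith
      qed
      then show ?thesis using div_mult_mod_eq[of k g] by simp
    qed
    have "I = spn Zr {of_int g}"
    proof
      show "I \<subseteq> spn Zr {of_int g}"
      proof
        fix i assume "i \<in> I"
        then obtain k where "k \<in> J" "i = of_int k" using Iof by blast
        then have "i = of_int (k div g) * of_int g + 0" using dvd by (metis add_0_right of_int_mult)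
        moreover have "of_int (k div g) \<in> (Zr::'a set)" unfolding Zr_def by simp
        moreover have "of_int (k div g) * of_int g + 0 \<in> spn Zr {(of_int g::'a)}"
          by (rule spn.spn_step[OF \<open>of_int (k div g) \<in> Zr\<close> _ spn.spn_zero]) simp
        ultimately show "i \<in> spn Zr {of_int g}" by simp
      qed
      have "of_int g \<in> I" using n unfolding J_def g_def by simp
      then show "spn Zr {of_int g} \<subseteq> I" by (intro submod_spn_le[OF Isub]) auto
    qed
    moreover have "of_int g \<in> I" using n unfolding J_def g_def by simp
    ultimately show ?thesis by (intro exI[of _ "{of_int g}"]) auto
  qed
qed

fun padjL :: "'a::ring_1 set \<Rightarrow> 'a list \<Rightarrow> 'a set" where
  "padjL R [] = R"
| "padjL R (y#ys) = padjL (padj R y) ys"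

lemma padjL_props:
  assumes "is_subring R" "R \<subseteq> ring_center" "Noeth R" "set ys \<subseteq> ring_center"
  shows "is_subring (padjL R ys) \<and> padjL R ys \<subseteq> ring_center \<and> Noeth (padjL R ys) \<and>
         R \<subseteq> padjL R ys \<and> set ys \<subseteq> padjL R ys"
  using assms
proof (induct ys arbitrary: R)
  case Nil then show ?case by simp
next
  case (Cons y ys R)
  have yc: "y \<in> ring_center" using Cons by simp
  have p: "is_subring (padj R y)" "padj R y \<subseteq> ring_center" "Noeth (padj R y)"
    "R \<subseteq> padj R y" "y \<in> padj R y"
    using padj_subring[OF Cons(2,3) yc] padj_center[OF Cons(2,3) yc] hilbert[OF Cons(2,3) yc Cons(4)]
      R_padj[OF Cons(2,3) yc] x_padj[OF Cons(2,3) yc] by auto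
  have "set ys \<subseteq> ring_center" using Cons by simp
  from Cons(1)[OF p(1,2,3) this] p(4,5) show ?case by auto
qed

lemma padjL_min:
  assumes "is_subring R" "R \<subseteq> ring_center" "set ys \<subseteq> ring_center"
    "R \<subseteq> X" "set ys \<subseteq> X" "is_subring X"
  shows "padjL R ys \<subseteq> X"
  using assms
proof (induct ys arbitrary: R)
  case Nil then show ?case by simp
next
  case (Cons y ys R)
  have yc: "y \<in> ring_center" using Cons by simp
  have "padj R y \<subseteq> X" using padj_min[OF Cons(2,3) yc] Cons by auto
  then show ?case using Cons(1)[OF padj_subring[OF Cons(2,3) yc] padj_center[OF Cons(2,3) yc]] Cons by auto
qed



locale invol =
  fixes bar :: "'a::ring_1 \<Rightarrow> 'a"
  assumes inv: "is_involution bar"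
begin

lemma bar_add: "bar (t+s) = bar t + bar s" using inv unfolding is_involution_def by blast
lemma bar_mult: "bar (t*s) = bar s * bar t" using inv unfolding is_involution_def by blast
lemma bar_bar: "bar (bar t) = t" using inv unfolding is_involution_def by blast
lemma bar_0: "bar 0 = 0"
proof -
  have "bar 0 = bar 0 + bar 0" using bar_add[of 0 0] by simp
  then show ?thesis by simp
qed
lemma bar_neg: "bar (-t) = - bar t"
proof -
  have "bar (-t) + bar t = 0" using bar_add[of "-t" t] bar_0 by simp
  then show ?thesis by (simp add: eq_neg_iff_add_eq_0)
qed
lemma bar_diff: "bar (t - s) = bar t - bar s"
  using bar_add[of t "-s"] bar_neg[of s] by simp
lemma bar_1: "bar 1 = 1"
proof -
  have "bar 1 = bar 1 * bar (bar 1)" by (simp add: bar_bar)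
  also have "\<dots> = bar (bar 1 * 1)" by (rule bar_mult[symmetric])
  also have "\<dots> = 1" by (simp add: bar_bar)
  finally show ?thesis .
qed
lemma bar_of_int: "bar (of_int k) = of_int k"
proof (induct k rule: int_induct[of _ 0])
  case base then show ?case by (simp add: bar_0)
next
  case (step1 i) then show ?case by (simp add: bar_add bar_1)
next
  case (step2 i) then show ?case by (simp add: bar_diff bar_1)
qed
lemma bar_power: "bar (x^n) = (bar x)^n"
proof (induct n)
  case 0 then show ?case by (simp add: bar_1)
next
  case (Suc n) then show ?case by (simp add: bar_mult power_commutes)
qed
lemma bar_center: "a \<in> ring_center \<Longrightarrow> bar a \<in> ring_center"
proof (rule ring_centerI)
  fix y assume a: "a \<in> ring_center"
  have "bar a * y = bar a * bar (bar y)" by (simp add: bar_bar)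
  also have "\<dots> = bar (bar y * a)" by (simp add: bar_mult)
  also have "\<dots> = bar (a * bar y)" using ring_centerD[OF a, of "bar y"] by simp
  also have "\<dots> = y * bar a" by (simp add: bar_mult bar_bar)
  finally show "bar a * y = y * bar a" .
qed

lemma Zr_bar: "bar ` Zr \<subseteq> Zr" unfolding Zr_def using bar_of_int by auto

lemma padj_bar:
  assumes sr: "is_subring R" and Rc: "R \<subseteq> ring_center" and RB: "bar ` R \<subseteq> R"
    and xc: "x \<in> ring_center" and xb: "bar x = x"
  shows "bar ` padj R x \<subseteq> padj R x"
proof
  fix q assume "q \<in> bar ` padj R x"
  then obtain p d where p: "p \<in> spn R (pw x d)" "q = bar p" unfolding padj_def by auto
  from p(1) have "bar p \<in> spn R (pw x d)"
  proof (induct rule: spn.induct)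
    case spn_zero then show ?case by (simp add: bar_0 spn.spn_zero)
  next
    case (spn_step r g y)
    then obtain i where i: "g = x^i" unfolding pw_def by auto
    have br: "bar r \<in> R" using RB spn_step(1) by blast
    have cm: "bar r * x^i = x^i * bar r" using ring_centerD[of "bar r" "x^i"] br Rc by blast
    have "bar (r*g + y) = bar r * g + bar y"
      using i by (simp add: bar_add bar_mult bar_power xb cm)
    then show ?case using br spn_step by (auto intro: spn.spn_step)
  qed
  then show "q \<in> padj R x" using p unfolding padj_def by blast
qed

lemma padjL_bar:
  assumes "is_subring R" "R \<subseteq> ring_center" "bar ` R \<subseteq> R" "set ys \<subseteq> ring_center" "\<forall>y\<in>set ys. bar y = y"
  shows "bar ` padjL R ys \<subseteq> padjL R ys"
  using assms
proof (induct ys arbitrary: R)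
  case Nil then show ?case by simp
next
  case (Cons y ys R)
  have yc: "y \<in> ring_center" "bar y = y" using Cons by auto
  show ?case using Cons(1)[OF padj_subring[OF Cons(2,3) yc(1)] padj_center[OF Cons(2,3) yc(1)]
      padj_bar[OF Cons(2,3,4) yc]] Cons(5,6) by simp
qed

fun adjL :: "'a set \<Rightarrow> 'a list \<Rightarrow> 'a set" where
  "adjL R [] = R"
| "adjL R (a#as) = adjL (spn R {1,a}) as"

lemma adj_step:
  assumes sr: "is_subring R" and Rc: "R \<subseteq> ring_center" and RB: "bar ` R \<subseteq> R"
    and ac: "a \<in> ring_center" and s: "a + bar a \<in> R" and n: "a * bar a \<in> R"
  shows "is_subring (spn R {1,a}) \<and> spn R {1,a} \<subseteq> ring_center \<and> bar ` spn R {1,a} \<subseteq> spn R {1,a}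
     \<and> R \<subseteq> spn R {1,a} \<and> a \<in> spn R {1,a}"
proof -
  let ?R1 = "spn R {1,a}"
  have mc: "\<forall>u\<in>R. \<forall>v\<in>R. u*v \<in> R" and one: "1 \<in> R" and z: "0 \<in> R"
    and dif: "\<forall>u\<in>R. \<forall>v\<in>R. u-v \<in> R" using sr unfolding is_subring_def by auto
  have negR: "u \<in> R \<Longrightarrow> -u \<in> R" for u using dif z by (metis diff_0)
  have oneR1: "1 \<in> ?R1" by (rule spn_gen[OF one]) simp
  have aR1: "a \<in> ?R1" by (rule spn_gen[OF one]) simp
  have RR1: "R \<subseteq> ?R1"
  proof
    fix r assume "r \<in> R" then have "r * 1 + 0 \<in> ?R1" by (rule spn_step[OF _ _ spn_zero]) simp
    then show "r \<in> ?R1" by simp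
  qed
  have aa: "a * a = (a + bar a) * a + (- (a * bar a)) * 1 + 0"
    using ring_centerD[OF ac, of "bar a"] by (simp add: distrib_right)
  have aaR1: "a*a \<in> ?R1"
  proof -
    have h1: "(- (a * bar a)) * 1 + 0 \<in> ?R1" by (rule spn_step[OF negR[OF n] _ spn_zero]) simp
    have "(a + bar a) * a + ((- (a * bar a)) * 1 + 0) \<in> ?R1" by (rule spn_step[OF s _ h1]) simp
    then show ?thesis using aa by (simp add: add.assoc)
  qed
  have sub: "is_subring ?R1" unfolding is_subring_def
  proof (intro conjI ballI)
    show "0 \<in> ?R1" by (rule spn_zero)
    show "1 \<in> ?R1" by (rule oneR1)
    fix u v assume u: "u \<in> ?R1" and v: "v \<in> ?R1"
    show "u + v \<in> ?R1" using spn_add[OF u v] .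
    show "u - v \<in> ?R1" using spn_diff[OF sr u v] .
    show "u * v \<in> ?R1"
      by (rule spn_mult[OF sr Rc _ u v]) (use oneR1 aR1 aaR1 in auto)
  qed
  have cen: "?R1 \<subseteq> ring_center" by (rule spn_center[OF Rc]) (use ac center_1 in auto)
  have baR1: "bar a \<in> ?R1"
  proof -
    have h1: "(-1) * a + 0 \<in> ?R1" by (rule spn_step[OF negR[OF one] _ spn_zero]) simp
    have "(a + bar a) * 1 + ((-1) * a + 0) \<in> ?R1" by (rule spn_step[OF s _ h1]) simp
    then show ?thesis by simp
  qed
  have bar: "bar ` ?R1 \<subseteq> ?R1"
  proof
    fix q assume "q \<in> bar ` ?R1"
    then obtain p where p: "p \<in> ?R1" "q = bar p" by auto
    from p(1) have "bar p \<in> ?R1"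
    proof (induct rule: spn.induct)
      case spn_zero then show ?case by (simp add: bar_0 spn.spn_zero)
    next
      case (spn_step r g y)
      have br: "bar r \<in> R" using RB spn_step(1) by blast
      have "bar g * bar r \<in> ?R1"
      proof (cases "g = 1")
        case True then show ?thesis using br RR1 by (auto simp: bar_1)
      next
        case False then have g: "g = a" using spn_step(2) by simp
        have "bar a * bar r = bar r * bar a" using ring_centerD[of "bar r" "bar a"] br Rc by auto
        moreover have "bar r * bar a \<in> ?R1" using spn_smult[OF mc br baR1] .
        ultimately show ?thesis using g by simp
      qed
      then show ?case using spn_step(4) spn_add by (simp add: bar_add bar_mult)
    qed
    then show "q \<in> ?R1" using p by simp
  qed
  show ?thesis using sub cen bar RR1 aR1 by blast
qed

lemma adjL_props:
  assumes "is_subring R" "R \<subseteq> ring_center" "bar ` R \<subseteq> R"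
    "\<forall>a\<in>set as. a \<in> ring_center \<and> a + bar a \<in> R \<and> a * bar a \<in> R"
  shows "is_subring (adjL R as) \<and> adjL R as \<subseteq> ring_center \<and> bar ` adjL R as \<subseteq> adjL R as
    \<and> R \<subseteq> adjL R as \<and> set as \<subseteq> adjL R as \<and> (\<exists>H. finite H \<and> H \<subseteq> adjL R as \<and> adjL R as = spn R H)"
  using assms
proof (induct as arbitrary: R)
  case Nil
  then show ?case using spn_one[OF Nil(1)] by (intro conjI exI[of _ "{1}"]) (auto simp: is_subring_def)
next
  case (Cons a as R)
  let ?R1 = "spn R {1,a}"
  have st: "is_subring ?R1" "?R1 \<subseteq> ring_center" "bar ` ?R1 \<subseteq> ?R1" "R \<subseteq> ?R1" "a \<in> ?R1"
    using adj_step[OF Cons(2,3,4)] Cons(5) by auto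
  have "\<forall>a\<in>set as. a \<in> ring_center \<and> a + bar a \<in> ?R1 \<and> a * bar a \<in> ?R1" using Cons(5) st(4) by auto
  note IH = Cons(1)[OF st(1,2,3) this]
  let ?C = "adjL ?R1 as"
  obtain H1 where H1: "finite H1" "H1 \<subseteq> ?C" "?C = spn ?R1 H1" using IH by blast
  have one: "1 \<in> ?R1" using st(1) unfolding is_subring_def by blast
  have tw: "spn ?R1 H1 = spn R ((\<lambda>p. fst p * snd p) ` ({1,a} \<times> H1))"
    by (rule spn_tower[OF Cons(2) st(1) st(4)]) (use one st(5) in auto)
  have mcC: "\<forall>u\<in>?C. \<forall>v\<in>?C. u*v \<in> ?C" using IH unfolding is_subring_def by blast
  have R1C: "?R1 \<subseteq> ?C" using IH by blast
  have "(\<lambda>p. fst p * snd p) ` ({1,a} \<times> H1) \<subseteq> ?C"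
  proof
    fix w assume "w \<in> (\<lambda>p. fst p * snd p) ` ({1,a} \<times> H1)"
    then obtain p where p: "p \<in> {1,a} \<times> H1" "w = fst p * snd p" by blast
    then obtain u v where uv: "u \<in> {1,a}" "v \<in> H1" "w = u*v" by (cases p) auto
    have "u \<in> ?C" using uv(1) one st(5) R1C by auto
    moreover have "v \<in> ?C" using uv(2) H1(2) by blast
    ultimately show "w \<in> ?C" using mcC uv(3) by blast
  qed
  moreover have "finite ((\<lambda>p. fst p * snd p) ` ({1,a} \<times> H1))" using H1(1) by simp
  ultimately have "\<exists>H. finite H \<and> H \<subseteq> ?C \<and> ?C = spn R H" using H1(3) tw by blast
  then show ?case using IH st by auto
qed

lemma adjL_min:
  assumes "R \<subseteq> X" "set as \<subseteq> X" "is_subring X"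
  shows "adjL R as \<subseteq> X"
  using assms
proof (induct as arbitrary: R)
  case Nil then show ?case by simp
next
  case (Cons a as R)
  have "spn R {1,a} \<subseteq> X" by (rule spn_min) (use Cons in \<open>auto simp: is_subring_def\<close>)
  then show ?case using Cons by simp
qed

lemma ns_add: assumes "x \<in> norm_sums bar C" and y: "y \<in> norm_sums bar C" shows "x + y \<in> norm_sums bar C"
  using assms(1)
proof (induct rule: norm_sums.induct)
  case zero then show ?case using y by simp
next
  case (plus c x)
  have "c * bar c + (x + y) \<in> norm_sums bar C" by (rule norm_sums.plus[OF plus(1,3)])
  then show ?case by (simp only: add.assoc)
next
  case (minus c x)
  have "- (c * bar c) + (x + y) \<in> norm_sums bar C" by (rule norm_sums.minus[OF minus(1,3)])
  then show ?case by (simp only: add.assoc)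
qed

lemma ns_neg: "x \<in> norm_sums bar C \<Longrightarrow> - x \<in> norm_sums bar C"
proof (induct rule: norm_sums.induct)
  case zero then show ?case by (simp add: norm_sums.zero)
next
  case (plus c x) then show ?case using norm_sums.minus[of c C "-x" bar] by (simp add: add.commute)
next
  case (minus c x) then show ?case using norm_sums.plus[of c C "-x" bar] by (simp add: add.commute)
qed

lemma norm_mult: assumes "c \<in> ring_center" "d \<in> ring_center"
  shows "c * bar c * (d * bar d) = (c*d) * bar (c*d)"
proof -
  have bc: "bar c \<in> ring_center" using bar_center assms(1) by blast
  have "c * bar c * (d * bar d) = c * (bar c * d) * bar d" by (simp add: mult.assoc)
  also have "\<dots> = c * (d * bar c) * bar d" using ring_centerD[OF bc, of d] by simp
  also have "\<dots> = c * d * (bar c * bar d)" by (simp add: mult.assoc)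
  also have "\<dots> = c * d * (bar d * bar c)" using ring_centerD[OF bc, of "bar d"] by simp
  finally show ?thesis by (simp add: bar_mult)
qed

lemma ns_mult:
  assumes Cc: "C \<subseteq> ring_center" and mc: "\<forall>u\<in>C. \<forall>v\<in>C. u*v \<in> C"
    and x: "x \<in> norm_sums bar C" and y: "y \<in> norm_sums bar C"
  shows "x * y \<in> norm_sums bar C"
proof -
  have inner: "c * bar c * y \<in> norm_sums bar C" if c: "c \<in> C" for c
    using y
  proof (induct rule: norm_sums.induct)
    case zero then show ?case by (simp add: norm_sums.zero)
  next
    case (plus d y0)
    have nm: "c * bar c * (d * bar d) = (c*d) * bar (c*d)" using norm_mult[of c d] c plus(1) Cc by auto
    have "c * bar c * (d * bar d + y0) = (c*d) * bar (c*d) + c * bar c * y0"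
      by (simp only: distrib_left nm)
    moreover have "c*d \<in> C" using c plus(1) mc by blast
    ultimately show ?case using norm_sums.plus[OF _ plus(3), of "c*d"] by simp
  next
    case (minus d y0)
    have nm: "c * bar c * (d * bar d) = (c*d) * bar (c*d)" using norm_mult[of c d] c minus(1) Cc by auto
    have "c * bar c * (- (d * bar d) + y0) = - (c * bar c * (d * bar d)) + c * bar c * y0"
      by (simp only: distrib_left mult_minus_right)
    then have "c * bar c * (- (d * bar d) + y0) = - ((c*d) * bar (c*d)) + c * bar c * y0"
      by (simp only: nm)
    moreover have "c*d \<in> C" using c minus(1) mc by blast
    ultimately show ?case using norm_sums.minus[OF _ minus(3), of "c*d"] by simp
  qed
  from x show ?thesis
  proof (induct rule: norm_sums.induct)
    case zero then show ?case by (simp add: norm_sums.zero)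
  next
    case (plus c x0)
    have "(c * bar c + x0) * y = c * bar c * y + x0 * y" by (simp add: distrib_right)
    then show ?case using plus inner ns_add by metis
  next
    case (minus c x0)
    have "(- (c * bar c) + x0) * y = - (c * bar c * y) + x0 * y" by (simp only: distrib_right mult_minus_left)
    then show ?case using minus inner ns_add ns_neg by metis
  qed
qed

lemma ns_norm: "c \<in> C \<Longrightarrow> c * bar c \<in> norm_sums bar C"
  using norm_sums.plus[of c C 0 bar] norm_sums.zero[of bar C] by simp

lemma ns_subring: assumes "is_subring C" "C \<subseteq> ring_center" shows "is_subring (norm_sums bar C)"
  unfolding is_subring_def
proof (intro conjI ballI)
  have one: "1 \<in> C" using assms unfolding is_subring_def by blast
  show "0 \<in> norm_sums bar C" by (rule norm_sums.zero)
  show "1 \<in> norm_sums bar C" using ns_norm[OF one] by (simp add: bar_1)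
  fix x y assume x: "x \<in> norm_sums bar C" and y: "y \<in> norm_sums bar C"
  show "x + y \<in> norm_sums bar C" by (rule ns_add[OF x y])
  show "x - y \<in> norm_sums bar C" using ns_add[OF x ns_neg[OF y]] by simp
  show "x * y \<in> norm_sums bar C" by (rule ns_mult[OF assms(2) _ x y]) (use assms(1) in \<open>auto simp: is_subring_def\<close>)
qed

lemma ns_sub: assumes "is_subring C" "bar ` C \<subseteq> C" shows "norm_sums bar C \<subseteq> C"
proof
  fix x assume "x \<in> norm_sums bar C"
  then show "x \<in> C"
  proof (induct rule: norm_sums.induct)
    case zero then show ?case using assms unfolding is_subring_def by blast
  next
    case (plus c x)
    have "c * bar c \<in> C" using assms plus(1) unfolding is_subring_def by blast
    then show ?case using plus assms unfolding is_subring_def by blast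
  next
    case (minus c x)
    have "c * bar c \<in> C" using assms minus(1) unfolding is_subring_def by blast
    then have "0 - c * bar c \<in> C" using assms unfolding is_subring_def by blast
    then show ?case using minus assms unfolding is_subring_def by (metis diff_0)
  qed
qed

lemma ns_trace: assumes "is_subring C" "c \<in> C" shows "c + bar c \<in> norm_sums bar C"
proof -
  have one: "1 \<in> C" and c1: "1 + c \<in> C" using assms unfolding is_subring_def by auto
  have "- (c * bar c) + 0 \<in> norm_sums bar C" by (rule norm_sums.minus[OF assms(2) norm_sums.zero])
  then have "- (1 * bar 1) + (- (c * bar c) + 0) \<in> norm_sums bar C" by (rule norm_sums.minus[OF one])
  then have "(1 + c) * bar (1 + c) + (- (1 * bar 1) + (- (c * bar c) + 0)) \<in> norm_sums bar C"
    by (rule norm_sums.plus[OF c1])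
  moreover have "(1 + c) * bar (1 + c) + (- (1 * bar 1) + (- (c * bar c) + 0)) = c + bar c"
    by (simp add: bar_add bar_1 algebra_simps)
  ultimately show ?thesis by simp
qed

end



theorem lemma4p13:
  fixes bar :: "'a::ring_1 \<Rightarrow> 'a" and lam :: 'a
  assumes "(1::'a) \<noteq> 0"
    and "almost_commutative TYPE('a)"
    and "is_involution bar"
    and "lam \<in> ring_center"
  shows "\<exists>\<T> :: 'a set set.
           \<T> \<noteq> {} \<and>
           (\<forall>A\<in>\<T>. \<forall>B\<in>\<T>. \<exists>D\<in>\<T>. A \<union> B \<subseteq> D) \<and>
           \<Union>\<T> = UNIV \<and>
           (\<forall>Tj\<in>\<T>. is_subring Tj \<and> bar ` Tj \<subseteq> Tj \<and> lam \<in> Tj \<and>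
              (\<exists>C'. is_subring C' \<and> C' \<subseteq> center_of Tj \<and>
                    noetherian_module (norm_sums bar C') Tj))"
proof -
  interpret invol bar by (rule invol.intro) (rule assms(3))
  obtain S :: "'a set" where Sfin: "finite S"
    and Sspan: "\<forall>t. \<exists>c. (\<forall>s\<in>S. c s \<in> ring_center) \<and> t = (\<Sum>s\<in>S. c s * s)"
    using assms(2) unfolding almost_commutative_def by blast
  have "\<exists>coef. \<forall>t. (\<forall>s\<in>S. coef t s \<in> ring_center) \<and> t = (\<Sum>s\<in>S. coef t s * s)"
    using Sspan by (rule choice)
  then obtain coef where coef: "\<And>t. (\<forall>s\<in>S. coef t s \<in> ring_center) \<and> t = (\<Sum>s\<in>S. coef t s * s)"
    by blast
  define Tset where "Tset = {s*s' | s s'. s \<in> S \<and> s' \<in> S} \<union> bar ` S \<union> {lam, 1}"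
  have Tfin: "finite Tset" unfolding Tset_def using Sfin by (auto intro: finite_image_set2)
  define K where "K = (\<lambda>p. coef (fst p) (snd p)) ` (Tset \<times> S)"
  have Kfin: "finite K" unfolding K_def using Tfin Sfin by simp
  have Kc: "K \<subseteq> ring_center" unfolding K_def using coef by auto
  define A where "A E = (E \<union> K) \<union> bar ` (E \<union> K)" for E
  define Y where "Y E = (\<lambda>a. a + bar a) ` A E \<union> (\<lambda>a. a * bar a) ` A E" for E
  define ys where "ys E = (SOME l. set l = Y E)" for E
  define as where "as E = (SOME l. set l = A E)" for E
  define Rf where "Rf E = padjL Zr (ys E)" for E
  define CC where "CC E = adjL (Rf E) (as E)" for E
  define TJ where "TJ E = spn (CC E) S" for E
  have Afacts: "finite (A E) \<and> A E \<subseteq> ring_center \<and> bar ` A E \<subseteq> A E" if "finite E" "E \<subseteq> ring_center" for E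
  proof -
    have "bar ` bar ` (E \<union> K) = E \<union> K" by (force simp: bar_bar image_image)
    then have "bar ` A E \<subseteq> A E" unfolding A_def by (auto simp: image_Un)
    moreover have "A E \<subseteq> ring_center" unfolding A_def using that Kc bar_center by auto
    moreover have "finite (A E)" unfolding A_def using that Kfin by simp
    ultimately show ?thesis by blast
  qed
  have Yfacts: "finite (Y E) \<and> Y E \<subseteq> ring_center \<and> (\<forall>y\<in>Y E. bar y = y)" if "finite E" "E \<subseteq> ring_center" for E
  proof -
    have "Y E \<subseteq> ring_center" unfolding Y_def using Afacts[OF that] bar_center center_add center_mult by blast
    moreover have "finite (Y E)" unfolding Y_def using Afacts[OF that] by simp
    moreover have "\<forall>y\<in>Y E. bar y = y" unfolding Y_def by (auto simp: bar_add bar_mult bar_bar add.commute)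
    ultimately show ?thesis by blast
  qed
  have setys: "set (ys E) = Y E" if "finite E" "E \<subseteq> ring_center" for E
    unfolding ys_def by (rule someI_ex) (use finite_list Yfacts[OF that] in blast)
  have setas: "set (as E) = A E" if "finite E" "E \<subseteq> ring_center" for E
    unfolding as_def by (rule someI_ex) (use finite_list Afacts[OF that] in blast)
  have main: "is_subring (Rf E) \<and> Rf E \<subseteq> ring_center \<and> Noeth (Rf E) \<and> Y E \<subseteq> Rf E \<and>
     is_subring (CC E) \<and> CC E \<subseteq> ring_center \<and> bar ` CC E \<subseteq> CC E \<and> Rf E \<subseteq> CC E \<and> A E \<subseteq> CC E \<and>
     (\<exists>H. finite H \<and> H \<subseteq> CC E \<and> CC E = spn (Rf E) H)" if E: "finite E" "E \<subseteq> ring_center" for E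
  proof -
    have yc: "set (ys E) \<subseteq> ring_center" using setys[OF E] Yfacts[OF E] by simp
    have R: "is_subring (Rf E)" "Rf E \<subseteq> ring_center" "Noeth (Rf E)" "Y E \<subseteq> Rf E"
      using padjL_props[OF Zr_subring Zr_center Zr_noeth yc] setys[OF E] unfolding Rf_def by auto
    have RB: "bar ` Rf E \<subseteq> Rf E" unfolding Rf_def
      by (rule padjL_bar[OF Zr_subring Zr_center Zr_bar yc]) (use setys[OF E] Yfacts[OF E] in simp)
    have "\<forall>a\<in>set (as E). a \<in> ring_center \<and> a + bar a \<in> Rf E \<and> a * bar a \<in> Rf E"
      using setas[OF E] Afacts[OF E] R(4) unfolding Y_def by auto
    note C = adjL_props[OF R(1,2) RB this]
    show ?thesis using R C setas[OF E] unfolding CC_def by auto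
  qed
  have mono: "CC E \<subseteq> CC E'" if E: "finite E" "E \<subseteq> ring_center" and E': "finite E'" "E' \<subseteq> ring_center"
    and EE: "E \<subseteq> E'" for E E'
  proof -
    have AA: "A E \<subseteq> A E'" unfolding A_def using EE by auto
    then have YY: "Y E \<subseteq> Y E'" unfolding Y_def by auto
    have X: "is_subring (CC E')" "Rf E' \<subseteq> CC E'" "Y E' \<subseteq> Rf E'" "A E' \<subseteq> CC E'" using main[OF E'] by auto
    have yc: "set (ys E) \<subseteq> ring_center" using setys[OF E] Yfacts[OF E] by simp
    have "Rf E \<subseteq> CC E'" unfolding Rf_def
      by (rule padjL_min[OF Zr_subring Zr_center yc Zr_min[OF X(1)]]) (use setys[OF E] YY X in auto)
    then show ?thesis unfolding CC_def[of E]
      by (rule adjL_min) (use setas[OF E] AA X in auto)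
  qed
  have props: "is_subring (TJ E) \<and> bar ` TJ E \<subseteq> TJ E \<and> lam \<in> TJ E \<and>
      (\<exists>C'. is_subring C' \<and> C' \<subseteq> center_of (TJ E) \<and> noetherian_module (norm_sums bar C') (TJ E))"
    if E: "finite E" "E \<subseteq> ring_center" for E
  proof -
    let ?C = "CC E" and ?R = "Rf E"
    have m: "is_subring ?R" "?R \<subseteq> ring_center" "Noeth ?R" "Y E \<subseteq> ?R"
      "is_subring ?C" "?C \<subseteq> ring_center" "bar ` ?C \<subseteq> ?C" "?R \<subseteq> ?C" "A E \<subseteq> ?C"
      using main[OF E] by auto
    obtain H where H: "finite H" "H \<subseteq> ?C" "?C = spn ?R H" using main[OF E] by blast
    have z: "0 \<in> ?C" and ad: "\<forall>u\<in>?C. \<forall>v\<in>?C. u+v \<in> ?C" and mc: "\<forall>u\<in>?C. \<forall>v\<in>?C. u*v \<in> ?C"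
      using m(5) unfolding is_subring_def by auto
    have KC: "K \<subseteq> ?C" using m(9) unfolding A_def by auto
    have combo: "(\<Sum>s\<in>S. c s * s) \<in> TJ E" if "\<forall>s\<in>S. c s \<in> ?C" for c
    proof -
      have "(\<Sum>s\<in>S. c s * s) \<in> lin_span ?C S" unfolding lin_span_def using that by blast
      then show ?thesis unfolding TJ_def using lin_span_eq[OF Sfin z ad] by simp
    qed
    have Tin: "t \<in> TJ E" if "t \<in> Tset" for t
    proof -
      have "\<forall>s\<in>S. coef t s \<in> ?C" using that KC unfolding K_def by force
      then show ?thesis using combo coef[of t] by metis
    qed
    have oneT: "1 \<in> TJ E" using Tin unfolding Tset_def by blast
    have sub: "is_subring (TJ E)" unfolding is_subring_def
    proof (intro conjI ballI)
      show "0 \<in> TJ E" unfolding TJ_def by (rule spn_zero)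
      show "1 \<in> TJ E" by (rule oneT)
      fix u v assume u: "u \<in> TJ E" and v: "v \<in> TJ E"
      show "u + v \<in> TJ E" using spn_add u v unfolding TJ_def by blast
      show "u - v \<in> TJ E" using spn_diff[OF m(5)] u v unfolding TJ_def by blast
      have "\<forall>g\<in>S. \<forall>h\<in>S. g*h \<in> spn ?C S" using Tin unfolding Tset_def TJ_def by blast
      then show "u * v \<in> TJ E" using spn_mult[OF m(5,6)] u v unfolding TJ_def by blast
    qed
    have barT: "bar ` TJ E \<subseteq> TJ E"
    proof
      fix q assume "q \<in> bar ` TJ E"
      then obtain p where p: "p \<in> spn ?C S" "q = bar p" unfolding TJ_def by auto
      from p(1) have "bar p \<in> spn ?C S"
      proof (induct rule: spn.induct)
        case spn_zero then show ?case by (simp add: bar_0 spn.spn_zero)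
      next
        case (spn_step r g y)
        have br: "bar r \<in> ?C" using m(7) spn_step(1) by blast
        have bg: "bar g \<in> spn ?C S" using Tin spn_step(2) unfolding Tset_def TJ_def by blast
        have "bar g * bar r = bar r * bar g" using ring_centerD[of "bar r" "bar g"] br m(6) by auto
        moreover have "bar r * bar g \<in> spn ?C S" by (rule spn_smult[OF mc br bg])
        ultimately have "bar g * bar r \<in> spn ?C S" by simp
        then show ?case using spn_step(4) spn_add by (simp add: bar_add bar_mult)
      qed
      then show "q \<in> TJ E" using p unfolding TJ_def by simp
    qed
    have lamT: "lam \<in> TJ E" using Tin unfolding Tset_def by blast
    have Ccent: "?C \<subseteq> center_of (TJ E)"
    proof
      fix c assume c: "c \<in> ?C"
      have "c * 1 \<in> TJ E" using spn_smult[OF mc c] oneT unfolding TJ_def by blast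
      moreover have "\<forall>x\<in>TJ E. c * x = x * c" using c m(6) ring_centerD by blast
      ultimately show "c \<in> center_of (TJ E)" unfolding center_of_def by simp
    qed
    let ?NC = "norm_sums bar ?C"
    have NCsub: "is_subring ?NC" by (rule ns_subring[OF m(5,6)])
    have NCC: "?NC \<subseteq> ?C" by (rule ns_sub[OF m(5,7)])
    have zN: "0 \<in> ?NC" and adN: "\<forall>u\<in>?NC. \<forall>v\<in>?NC. u+v \<in> ?NC" using NCsub unfolding is_subring_def by auto
    have YN: "Y E \<subseteq> ?NC" unfolding Y_def using m(9) ns_trace[OF m(5)] ns_norm by blast
    have yc: "set (ys E) \<subseteq> ring_center" using setys[OF E] Yfacts[OF E] by simp
    have RN: "?R \<subseteq> ?NC" unfolding Rf_def
      by (rule padjL_min[OF Zr_subring Zr_center yc Zr_min[OF NCsub]]) (use setys[OF E] YN NCsub in auto)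
    let ?HS = "(\<lambda>p. fst p * snd p) ` (H \<times> S)"
    have tw: "TJ E = spn ?R ?HS" unfolding TJ_def
      by (rule spn_tower[OF m(1,5,8) H(2)]) (use H(3) in simp)
    have HSfin: "finite ?HS" using H(1) Sfin by simp
    have "noetherian_module ?NC (TJ E)" unfolding noetherian_module_def
    proof (intro conjI allI impI)
      show "is_submodule ?NC (TJ E) (TJ E)" unfolding is_submodule_def
        using sub spn_smult[OF mc] NCC unfolding is_subring_def TJ_def by blast
      fix N assume N: "is_submodule ?NC (TJ E) N"
      have "is_submodule ?R (spn ?R ?HS) N" using N RN unfolding is_submodule_def tw by blast
      then obtain F where F: "finite F" "F \<subseteq> N" "N = spn ?R F"
        using m(3) HSfin unfolding Noeth_def by blast
      have "spn ?NC F \<subseteq> N" by (rule submod_spn_le[OF N F(2)])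
      moreover have "spn ?R F \<subseteq> spn ?NC F" by (rule spn_mono[OF RN]) simp
      ultimately have "N = spn ?NC F" using F(3) by blast
      then have "N = lin_span ?NC F" using lin_span_eq[OF F(1) zN adN] by simp
      then show "\<exists>G. finite G \<and> G \<subseteq> N \<and> N = lin_span ?NC G" using F by blast
    qed
    then show ?thesis using sub barT lamT Ccent m(5) by blast
  qed
  define TT where "TT = TJ ` {E. finite E \<and> E \<subseteq> ring_center}"
  show ?thesis
  proof (rule exI[of _ TT], intro conjI)
    show "TT \<noteq> {}" unfolding TT_def by blast
    show "\<forall>A\<in>TT. \<forall>B\<in>TT. \<exists>D\<in>TT. A \<union> B \<subseteq> D"
    proof (intro ballI)
      fix A1 B1 assume "A1 \<in> TT" "B1 \<in> TT"
      then obtain E1 E2 where E: "finite E1" "E1 \<subseteq> ring_center" "finite E2" "E2 \<subseteq> ring_center"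
        "A1 = TJ E1" "B1 = TJ E2" unfolding TT_def by blast
      have E12: "finite (E1 \<union> E2)" "E1 \<union> E2 \<subseteq> ring_center" using E by auto
      have "TJ E1 \<subseteq> TJ (E1 \<union> E2)" "TJ E2 \<subseteq> TJ (E1 \<union> E2)" unfolding TJ_def
        using spn_mono[OF mono[OF E(1,2) E12], of S S] spn_mono[OF mono[OF E(3,4) E12], of S S] by auto
      moreover have "TJ (E1 \<union> E2) \<in> TT" unfolding TT_def using E12 by blast
      ultimately show "\<exists>D\<in>TT. A1 \<union> B1 \<subseteq> D" using E by blast
    qed
    show "\<Union>TT = UNIV"
    proof (rule set_eqI, rule iffI)
      fix t :: 'a assume "t \<in> UNIV"
      define E where "E = coef t ` S"
      have E: "finite E" "E \<subseteq> ring_center" unfolding E_def using Sfin coef by auto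
      have "\<forall>s\<in>S. coef t s \<in> CC E" using main[OF E] unfolding A_def E_def by blast
      then have "(\<Sum>s\<in>S. coef t s * s) \<in> lin_span (CC E) S" unfolding lin_span_def by blast
      moreover have "0 \<in> CC E" "\<forall>u\<in>CC E. \<forall>v\<in>CC E. u+v \<in> CC E" using main[OF E] unfolding is_subring_def by auto
      ultimately have "t \<in> TJ E" unfolding TJ_def using lin_span_eq[OF Sfin] coef[of t] by metis
      then show "t \<in> \<Union>TT" unfolding TT_def using E by blast
    qed simp
    show "\<forall>Tj\<in>TT. is_subring Tj \<and> bar ` Tj \<subseteq> Tj \<and> lam \<in> Tj \<and>
              (\<exists>C'. is_subring C' \<and> C' \<subseteq> center_of Tj \<and> noetherian_module (norm_sums bar C') Tj)"
      unfolding TT_def using props by blast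
  qed
qed


end
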